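(* Let $N \ge 1$ and let $W_N$ be the set of binary words of length $N$. Define $\varphi_3 : W_N \to W_N$ by $\varphi_3(u) = v\, 0 11\, 0^{p-1} v'$ if $u = v 0^p 11 v'$ where $p \geq 2$, $v'$ is a (possibly empty) word, and $v$ is a (possibly empty) word which does not contain $0011$ as a contiguous subword and which is either empty or ends with the letter $1$; and $\varphi_3(u) = u$ otherwise. Then $|P(\varphi_3(u))| \leq |P(u)|$ for every $u \in W_N$.
   Context: For a binary word $x$, $x^j$ denotes $j$ concatenated copies of $x$, and juxtaposition denotes concatenation. For a binary word $w = w_1 \cdots w_\ell$ of length $\ell$, $P(w)$ is the set of indices $i \geq 2$ such that at least one of the following holds: (i) $\ell \geq i$ and $w_{i-1} w_i = 00$; (ii) $\ell \geq i+2$ and $w_{i-1} w_i w_{i+1} w_{i+2} = 0100$; (iii) $\ell \geq i+3$ and $w_{i-1} \cdots w_{i+3} = 01010$. *)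

theory Defs
  imports Main
begin

text \<open>Binary words are lists over {0,1} (as naturals). Positions are 1-indexed in the
paper: w_i is w ! (i - 1).\<close>

definition binword :: "nat \<Rightarrow> nat list set" where
  "binword N = {w. length w = N \<and> set w \<subseteq> {0, 1}}"

definition letter :: "nat list \<Rightarrow> nat \<Rightarrow> nat" where
  "letter w i = w ! (i - 1)"

definition Pset :: "nat list \<Rightarrow> nat set" where
  "Pset w = {i. 2 \<le> i \<and>
     ((length w \<ge> i \<and> letter w (i-1) = 0 \<and> letter w i = 0)
    \<or> (length w \<ge> i + 2 \<and> letter w (i-1) = 0 \<and> letter w i = 1
          \<and> letter w (i+1) = 0 \<and> letter w (i+2) = 0)
    \<or> (length w \<ge> i + 3 \<and> letter w (i-1) = 0 \<and> letter w i = 1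
          \<and> letter w (i+1) = 0 \<and> letter w (i+2) = 1 \<and> letter w (i+3) = 0))}"

definition contains_factor :: "nat list \<Rightarrow> nat list \<Rightarrow> bool" where
  "contains_factor x v \<longleftrightarrow> (\<exists>a b. v = a @ x @ b)"

definition phi3_dec :: "nat list \<Rightarrow> nat list \<Rightarrow> nat \<Rightarrow> nat list \<Rightarrow> bool" where
  "phi3_dec u v p v' \<longleftrightarrow>
     u = v @ replicate p 0 @ [1, 1] @ v' \<and> p \<ge> 2 \<and>
     \<not> contains_factor [0, 0, 1, 1] v \<and> (v = [] \<or> last v = 1)"

definition phi3 :: "nat list \<Rightarrow> nat list" where
  "phi3 u = (if \<exists>v p v'. phi3_dec u v p v'
     then (case (SOME (v, p, v'). phi3_dec u v p v') of
             (v, p, v') \<Rightarrow> v @ [0, 1, 1] @ replicate (p - 1) 0 @ v')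
     else u)"

end

theory Submission
  imports Defs
begin

definition pat :: "nat list \<Rightarrow> bool" where
  "pat s \<longleftrightarrow> (\<exists>r. s = 0#0#r) \<or> (\<exists>r. s = 0#1#0#0#r) \<or> (\<exists>r. s = 0#1#0#1#0#r)"

definition S :: "nat list \<Rightarrow> nat set" where
  "S w = {k. pat (drop k w)}"

lemma drop_eq_Cons: "drop k w = x#r \<longleftrightarrow> (k < length w \<and> w!k = x \<and> drop (Suc k) w = r)"
  by (metis Cons_nth_drop_Suc drop_all list.inject list.simps(3) not_le_imp_less)

lemma pat_drop: "pat (drop k w) \<longleftrightarrow>
   ((k+2 \<le> length w \<and> w!k = 0 \<and> w!(k+1) = 0)
  \<or> (k+4 \<le> length w \<and> w!k = 0 \<and> w!(k+1) = 1 \<and> w!(k+2) = 0 \<and> w!(k+3) = 0)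
  \<or> (k+5 \<le> length w \<and> w!k = 0 \<and> w!(k+1) = 1 \<and> w!(k+2) = 0 \<and> w!(k+3) = 1 \<and> w!(k+4) = 0))"
  unfolding pat_def drop_eq_Cons by (simp add: Suc_le_eq numeral_eq_Suc) (meson Suc_lessD)

lemma Pset_mem: "k + 2 \<in> Pset w \<longleftrightarrow> k \<in> S w"
  unfolding Pset_def S_def pat_drop letter_def
  by (simp add: numeral_eq_Suc)

lemma Pset_S: "Pset w = (\<lambda>k. k+2) ` S w"
proof -
  have "i \<in> Pset w \<longleftrightarrow> i \<in> (\<lambda>k. k+2) ` S w" for i
  proof (cases "2 \<le> i")
    case True
    then obtain k where k: "i = k + 2" by (metis le_add_diff_inverse2)
    show ?thesis unfolding k Pset_mem by auto
  qed (auto simp: Pset_def)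
  then show ?thesis by blast
qed

lemma card_Pset: "card (Pset w) = card (S w)"
  unfolding Pset_S by (rule card_image) (simp add: inj_on_def)

lemma pat_ne: "pat s \<Longrightarrow> s \<noteq> []" by (auto simp: pat_def)
lemma finite_S: "finite (S w)"
proof -
  have "S w \<subseteq> {..<length w}"
  proof
    fix k assume "k \<in> S w"
    then have "drop k w \<noteq> []" using pat_ne[of "drop k w"] by (simp add: S_def)
    then show "k \<in> {..<length w}" by (metis drop_all lessThan_iff not_less)
  qed
  then show ?thesis using finite_subset by blast
qed
lemma pat_long: "length s \<ge> 5 \<Longrightarrow> pat (s @ x) = pat (s @ y)"
proof -
  assume "length s \<ge> 5"
  then obtain x1 x2 x3 x4 x5 r where "s = x1#x2#x3#x4#x5#r"
    by (auto simp: Suc_le_length_iff numeral_eq_Suc)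
  then show ?thesis by (simp add: pat_def)
qed
lemma vpart: "s \<noteq> [] \<Longrightarrow> last s = 1 \<Longrightarrow> pat (s @ 0#1#1#t) \<Longrightarrow> pat (s @ 0#0#t')"
proof (cases "length s \<ge> 5")
  case True
  assume "pat (s @ 0#1#1#t)"
  then show ?thesis using pat_long[OF True] by metis
next
  case False
  assume a: "s \<noteq> []" "last s = 1" "pat (s @ 0#1#1#t)"
  have "length s = 1 \<or> length s = 2 \<or> length s = 3 \<or> length s = 4" proof -
    have "0 < length s" using a(1) by simp
    then show ?thesis using False by linarith
  qed
  then show ?thesis using a by (auto simp: pat_def length_Suc_conv numeral_eq_Suc)
qed

lemma main:
  assumes p: "p \<ge> 2" and v: "v = [] \<or> last v = 1"
  shows "card (S (v @ [0,1,1] @ replicate (p-1) 0 @ v')) \<le> card (S (v @ replicate p 0 @ [1,1] @ v'))"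
proof -
  define u where "u = v @ replicate p 0 @ [1,1] @ v'"
  define w where "w = v @ [0,1,1] @ replicate (p-1) 0 @ v'"
  define a where "a = length v"
  define f where "f k = (if a \<le> k \<and> k < a+p+2 then k-3 else k)" for k
  have lenu: "length (v @ replicate p 0 @ [1,1]) = a+p+2" by (simp add: a_def)
  have lenw: "length (v @ [0,1,1] @ replicate (p-1) 0) = a+p+2" using p by (simp add: a_def)
  have mid: "a+3 \<le> k \<and> k \<le> a+p-1+2" if "k \<in> S w" "a \<le> k" "k < a+p+2" for k
  proof -
    have "k \<noteq> a" using that(1) by (auto simp: S_def w_def a_def pat_def)
    moreover have "k \<noteq> a+1" using that(1) by (auto simp: S_def w_def a_def pat_def)
    moreover have "k \<noteq> a+2" using that(1) by (auto simp: S_def w_def a_def pat_def)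
    ultimately show ?thesis using that(2,3) p by auto
  qed
  have img: "f k \<in> S u" if k: "k \<in> S w" for k
  proof (cases "a \<le> k \<and> k < a+p+2")
    case True
    with mid k have km: "a+3 \<le> k" "k \<le> a+p+1" using p by auto
    define m where "m = k - 3 - a"
    have m: "k - 3 = a + m" "m + 2 \<le> p" using km unfolding m_def by linarith+
    have "drop (k-3) u = replicate (p - m) 0 @ [1,1] @ v'"
      using m(2) unfolding m u_def a_def by simp
    moreover obtain q where "p - m = Suc (Suc q)"
      using m(2) by (intro that[of "p - m - 2"]) linarith
    ultimately have "pat (drop (k-3) u)" by (simp add: pat_def)
    then show ?thesis using True by (simp add: f_def S_def)
  next
    case False
    then have fk: "f k = k" unfolding f_def by presburger
    show ?thesis
    proof (cases "k < a")
      case True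
      define s where "s = drop k v"
      have sne: "s \<noteq> []" "last s = 1" using True v by (auto simp: s_def a_def)
      have ps: "pat (s @ 0#1#1#(replicate (p-1) 0 @ v'))" using k True
        by (simp add: S_def w_def s_def a_def)
      obtain q where pq: "p = Suc (Suc q)" using p by (metis add_2_eq_Suc le_add_diff_inverse2 add.commute)
      from vpart[OF sne ps] have "pat (s @ 0#0#(replicate q 0 @ [1,1] @ v'))" .
      moreover have "s @ 0#0#(replicate q 0 @ [1,1] @ v') = drop k u"
        using True pq by (simp add: s_def u_def a_def)
      ultimately show ?thesis by (simp add: fk S_def)
    next
      case False2: False
      with False have ge: "a+p+2 \<le> k" by auto
      have "drop k u = drop k w"
      proof -
        have "u = (v @ replicate p 0 @ [1,1]) @ v'" "w = (v @ [0,1,1] @ replicate (p-1) 0) @ v'"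
          by (simp_all add: u_def w_def)
        then show ?thesis using ge lenu lenw by (simp only: drop_append) simp
      qed
      then show ?thesis using k by (simp add: fk S_def)
    qed
  qed
  have inj: "inj_on f (S w)"
  proof (rule inj_onI)
    fix x y assume x: "x \<in> S w" and y: "y \<in> S w" and e: "f x = f y"
    show "x = y" using mid[OF x] mid[OF y] e by (auto simp: f_def split: if_splits)
  qed
  have "card (S w) \<le> card (S u)"
    using card_inj_on_le[OF inj _ finite_S] img by blast
  then show ?thesis by (simp add: u_def w_def)
qed

theorem lemma4p3:
  fixes N :: nat and u :: "nat list"
  assumes "N \<ge> 1" and "u \<in> binword N"
  shows "card (Pset (phi3 u)) \<le> card (Pset u)"
proof (cases "\<exists>v p v'. phi3_dec u v p v'")
  case True
  then have "\<exists>x. (\<lambda>(v, p, v'). phi3_dec u v p v') x" by auto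
  then have h: "(\<lambda>(v, p, v'). phi3_dec u v p v') (SOME x. (\<lambda>(v, p, v'). phi3_dec u v p v') x)"
    by (rule someI_ex)
  obtain v p v' where e: "(SOME x. (\<lambda>(v, p, v'). phi3_dec u v p v') x) = (v, p, v')"
    by (metis prod_cases3)
  have d: "phi3_dec u v p v'" using h e by simp
  have "phi3 u = v @ [0, 1, 1] @ replicate (p - 1) 0 @ v'"
    using True e by (simp add: phi3_def)
  then show ?thesis using d main[of p v v'] by (simp add: card_Pset phi3_dec_def)
next
  case False
  then show ?thesis by (simp add: phi3_def)
qed

end
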